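(* For every $n\ge1$ and $i=1,2$, the formal semigroup $\mathcal{S}_{K_i}$ is not closed under addition (hence not a semigroup); indeed $4\in\mathcal{S}_{K_i}$ but $4n+4\notin\mathcal{S}_{K_i}$. Here $K_1,K_2$ are the closures of $(\sigma_2\sigma_1\sigma_3\sigma_2)(\sigma_1\sigma_2\sigma_3)^{4n}\sigma_2^{-1}(\sigma_2\sigma_3)^6$ and $(\sigma_2\sigma_1\sigma_3\sigma_2)(\sigma_1\sigma_2\sigma_3)^{4n}\sigma_3^{-1}(\sigma_2\sigma_3)^6$.
   Context: For a knot $K$ whose Alexander polynomial, normalized to be a polynomial with constant term $1$, is $\Delta_K(t)$, the formal semigroup $\mathcal{S}_K\subset\mathbb{Z}_{\ge0}$ is defined by $\Delta_K(t)/(1-t)=\sum_{s\in\mathcal{S}_K}t^s$. $\sigma_i$ are the standard generators of the $4$--strand braid group. *)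

theory Defs
  imports "HOL-Computational_Algebra.Polynomial"
          "HOL-Computational_Algebra.Fraction_Field"
          "HOL-Computational_Algebra.Polynomial_FPS"
          "Jordan_Normal_Form.Determinant"
begin

text \<open>Braid words in the 4-strand braid group: the letter i (i = 1,2,3) stands for
  sigma_i and the letter -i for its inverse; words are read left to right.\<close>
type_synonym braid_word = "int list"

type_synonym ratfun = "int poly fract"

definition tvar :: ratfun where "tvar = to_fract [:0, 1:]"

definition burau_gen :: "int \<Rightarrow> ratfun mat" where
  "burau_gen x = mat 3 3 (\<lambda>(i, j).
     (if x = 1 then
        (if (i, j) = (0, 0) then - tvar else if (i, j) = (0, 1) then 1
         else if i = j then 1 else 0)
      else if x = 2 then
        (if (i, j) = (1, 0) then tvar else if (i, j) = (1, 1) then - tvar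
         else if (i, j) = (1, 2) then 1 else if i = j then 1 else 0)
      else if x = 3 then
        (if (i, j) = (2, 1) then tvar else if (i, j) = (2, 2) then - tvar
         else if i = j then 1 else 0)
      else if x = -1 then
        (if (i, j) = (0, 0) then - inverse tvar else if (i, j) = (0, 1) then inverse tvar
         else if i = j then 1 else 0)
      else if x = -2 then
        (if (i, j) = (1, 0) then 1 else if (i, j) = (1, 1) then - inverse tvar
         else if (i, j) = (1, 2) then inverse tvar else if i = j then 1 else 0)
      else if x = -3 then
        (if (i, j) = (2, 1) then 1 else if (i, j) = (2, 2) then - inverse tvar
         else if i = j then 1 else 0)
      else (if i = j then 1 else 0)))"

definition burau :: "braid_word \<Rightarrow> ratfun mat" where
  "burau w = foldl (\<lambda>M x. M * burau_gen x) (1\<^sub>m 3) w"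

text \<open>p is the Alexander polynomial of the closure of the 4-braid w, normalized to be a
  polynomial with constant term 1.  Uses the Burau formula
  det(I - burau(w)) = (1 + t + t^2 + t^3) * Delta(t), up to units +-t^k.\<close>
definition alexander_poly_closure :: "braid_word \<Rightarrow> int poly \<Rightarrow> bool" where
  "alexander_poly_closure w p \<longleftrightarrow>
     poly.coeff p 0 = 1 \<and>
     (\<exists>(e::int) (k::int). (e = 1 \<or> e = -1) \<and>
        det (1\<^sub>m 3 - burau w) =
          of_int e * tvar powi k * to_fract (p * [:1, 1, 1, 1:]))"

definition is_formal_semigroup :: "int poly \<Rightarrow> nat set \<Rightarrow> bool" where
  "is_formal_semigroup p S \<longleftrightarrow>
     fps_of_poly p = (1 - fps_X) * Abs_fps (\<lambda>s. if s \<in> S then 1 else 0)"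

definition K1_word :: "nat \<Rightarrow> braid_word" where
  "K1_word n = [2, 1, 3, 2] @ concat (replicate (4 * n) [1, 2, 3]) @ [-2]
               @ concat (replicate 6 [2, 3])"

definition K2_word :: "nat \<Rightarrow> braid_word" where
  "K2_word n = [2, 1, 3, 2] @ concat (replicate (4 * n) [1, 2, 3]) @ [-3]
               @ concat (replicate 6 [2, 3])"

end

theory Submission
  imports Defs
begin

definition m3 :: "'a \<Rightarrow> 'a \<Rightarrow> 'a \<Rightarrow> 'a \<Rightarrow> 'a \<Rightarrow> 'a \<Rightarrow> 'a \<Rightarrow> 'a \<Rightarrow> 'a \<Rightarrow> 'a mat" where
  "m3 a b c d e f g h i = mat 3 3 (\<lambda>(r, s). [[a,b,c],[d,e,f],[g,h,i]] ! r ! s)"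

lemma m3_carrier: "m3 a b c d e f g h i \<in> carrier_mat 3 3"
  by (simp add: m3_def)

lemma less3: "(r::nat) < 3 \<longleftrightarrow> r = 0 \<or> r = 1 \<or> r = 2" by auto

lemma m3_mult:
  "m3 a b c d e f g h i * m3 a' b' c' d' e' f' g' h' i' =
   m3 (a*a'+b*d'+c*g') (a*b'+b*e'+c*h') (a*c'+b*f'+c*i')
      (d*a'+e*d'+f*g') (d*b'+e*e'+f*h') (d*c'+e*f'+f*i')
      (g*a'+h*d'+i*g') (g*b'+h*e'+i*h') (g*c'+h*f'+i*i')"
  (is "?L = ?R")
proof (rule eq_matI)
  fix r s assume "r < dim_row ?R" "s < dim_col ?R"
  then have "r < 3" "s < 3" by (auto simp: m3_def)
  then show "?L $$ (r, s) = ?R $$ (r, s)"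
    unfolding less3
    by (auto simp: m3_def scalar_prod_def row_def col_def numeral_3_eq_3 less_Suc_eq)
qed (auto simp: m3_def)

lemma m3_eq_iff: "m3 a b c d e f g h i = m3 a' b' c' d' e' f' g' h' i' \<longleftrightarrow>
  a = a' \<and> b = b' \<and> c = c' \<and> d = d' \<and> e = e' \<and> f = f' \<and> g = g' \<and> h = h' \<and> i = i'"
proof
  assume H: "m3 a b c d e f g h i = m3 a' b' c' d' e' f' g' h' i'"
  have "\<And>r s. r < 3 \<Longrightarrow> s < 3 \<Longrightarrow> m3 a b c d e f g h i $$ (r,s) = m3 a' b' c' d' e' f' g' h' i' $$ (r,s)"
    using H by simp
  from this[of 0 0] this[of 0 1] this[of 0 2] this[of 1 0] this[of 1 1] this[of 1 2]
    this[of 2 0] this[of 2 1] this[of 2 2]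
  show "a = a' \<and> b = b' \<and> c = c' \<and> d = d' \<and> e = e' \<and> f = f' \<and> g = g' \<and> h = h' \<and> i = i'"
    by (simp add: m3_def)
qed simp

lemma m3_one: "(1\<^sub>m 3 :: 'a::{zero,one} mat) = m3 1 0 0 0 1 0 0 0 1"
  by (rule eq_matI) (auto simp: m3_def less3)

lemma m3_smult: "k \<cdot>\<^sub>m m3 a b c d e f g h i = m3 (k*a) (k*b) (k*c) (k*d) (k*e) (k*f) (k*g) (k*h) (k*i)"
  by (rule eq_matI) (auto simp: m3_def less3)

lemma m3_minus: "m3 a b c d e f g h i - m3 a' b' c' d' e' f' g' h' i' =
   m3 (a-a') (b-b') (c-c') (d-d') (e-e') (f-f') (g-g') (h-h') (i-i')"
  by (rule eq_matI) (auto simp: m3_def less3)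


lemma det2: assumes A: "(A :: 'a::comm_ring_1 mat) \<in> carrier_mat 2 2"
  shows "det A = A$$(0,0)*A$$(1,1) - A$$(0,1)*A$$(1,0)"
proof -
  have d: "det (mat_delete A 0 j) = mat_delete A 0 j $$ (0,0)" for j
    by (rule det_single) (use A in \<open>auto simp: mat_delete_def\<close>)
  show ?thesis
    using A unfolding laplace_expansion_row[OF A, of 0, simplified]
    by (simp add: cofactor_def d numeral_2_eq_2 lessThan_Suc) (simp add: mat_delete_def)
qed

lemma det_m3: "det (m3 a b c d e f g h i :: 'a::comm_ring_1 mat) =
   a*e*i - a*f*h - b*d*i + b*f*g + c*d*h - c*e*g"
proof -
  let ?A = "m3 a b c d e f g h i"
  have A: "?A \<in> carrier_mat 3 3" by (rule m3_carrier)
  have d: "det (mat_delete ?A 0 j) = mat_delete ?A 0 j $$ (0,0)*mat_delete ?A 0 j $$(1,1)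
     - mat_delete ?A 0 j $$(0,1)*mat_delete ?A 0 j $$(1,0)" for j
    by (rule det2) (use A in \<open>auto simp: mat_delete_def\<close>)
  show ?thesis
    unfolding laplace_expansion_row[OF A, of 0, simplified]
    by (simp add: cofactor_def d numeral_3_eq_3 lessThan_Suc) (simp add: mat_delete_def m3_def algebra_simps)
qed


lemma gen1: "burau_gen (1) = m3 (- tvar) 1 0 0 1 0 0 0 1"
proof (rule eq_matI)
  fix r s assume "r < dim_row (m3 (- tvar) 1 0 0 1 0 0 0 1 :: ratfun mat)" "s < dim_col (m3 (- tvar) 1 0 0 1 0 0 0 1 :: ratfun mat)"
  then have "r < 3" "s < 3" by (auto simp: m3_def)
  then show "burau_gen (1) $$ (r, s) = m3 (- tvar) 1 0 0 1 0 0 0 1 $$ (r, s)"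
    unfolding less3 burau_gen_def by (elim disjE) (simp_all add: m3_def)
qed (auto simp: m3_def burau_gen_def)

lemma gen2: "burau_gen (2) = m3 1 0 0 tvar (- tvar) 1 0 0 1"
proof (rule eq_matI)
  fix r s assume "r < dim_row (m3 1 0 0 tvar (- tvar) 1 0 0 1 :: ratfun mat)" "s < dim_col (m3 1 0 0 tvar (- tvar) 1 0 0 1 :: ratfun mat)"
  then have "r < 3" "s < 3" by (auto simp: m3_def)
  then show "burau_gen (2) $$ (r, s) = m3 1 0 0 tvar (- tvar) 1 0 0 1 $$ (r, s)"
    unfolding less3 burau_gen_def by (elim disjE) (simp_all add: m3_def)
qed (auto simp: m3_def burau_gen_def)

lemma gen3: "burau_gen (3) = m3 1 0 0 0 1 0 0 tvar (- tvar)"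
proof (rule eq_matI)
  fix r s assume "r < dim_row (m3 1 0 0 0 1 0 0 tvar (- tvar) :: ratfun mat)" "s < dim_col (m3 1 0 0 0 1 0 0 tvar (- tvar) :: ratfun mat)"
  then have "r < 3" "s < 3" by (auto simp: m3_def)
  then show "burau_gen (3) $$ (r, s) = m3 1 0 0 0 1 0 0 tvar (- tvar) $$ (r, s)"
    unfolding less3 burau_gen_def by (elim disjE) (simp_all add: m3_def)
qed (auto simp: m3_def burau_gen_def)

lemma genm2: "burau_gen (-2) = m3 1 0 0 1 (- inverse tvar) (inverse tvar) 0 0 1"
proof (rule eq_matI)
  fix r s assume "r < dim_row (m3 1 0 0 1 (- inverse tvar) (inverse tvar) 0 0 1 :: ratfun mat)" "s < dim_col (m3 1 0 0 1 (- inverse tvar) (inverse tvar) 0 0 1 :: ratfun mat)"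
  then have "r < 3" "s < 3" by (auto simp: m3_def)
  then show "burau_gen (-2) $$ (r, s) = m3 1 0 0 1 (- inverse tvar) (inverse tvar) 0 0 1 $$ (r, s)"
    unfolding less3 burau_gen_def by (elim disjE) (simp_all add: m3_def)
qed (auto simp: m3_def burau_gen_def)

lemma genm3: "burau_gen (-3) = m3 1 0 0 0 1 0 0 1 (- inverse tvar)"
proof (rule eq_matI)
  fix r s assume "r < dim_row (m3 1 0 0 0 1 0 0 1 (- inverse tvar) :: ratfun mat)" "s < dim_col (m3 1 0 0 0 1 0 0 1 (- inverse tvar) :: ratfun mat)"
  then have "r < 3" "s < 3" by (auto simp: m3_def)
  then show "burau_gen (-3) $$ (r, s) = m3 1 0 0 0 1 0 0 1 (- inverse tvar) $$ (r, s)"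
    unfolding less3 burau_gen_def by (elim disjE) (simp_all add: m3_def)
qed (auto simp: m3_def burau_gen_def)

lemma gen_carrier: "burau_gen x \<in> carrier_mat 3 3"
  by (simp add: burau_gen_def)

lemma burau_carrier: "burau w \<in> carrier_mat 3 3"
proof -
  have "foldl (\<lambda>M x. M * burau_gen x) M w \<in> carrier_mat 3 3" if "M \<in> carrier_mat 3 3" for M
    using that by (induction w arbitrary: M) (auto intro!: mult_carrier_mat gen_carrier)
  then show ?thesis unfolding burau_def by simp
qed

lemma foldl_burau: "M \<in> carrier_mat 3 3 \<Longrightarrow>
  foldl (\<lambda>M x. M * burau_gen x) M w = M * burau w"
proof (induction w arbitrary: M rule: rev_induct)
  case Nil then show ?case by (simp add: burau_def)
next
  case (snoc x xs)
  have "foldl (\<lambda>M x. M * burau_gen x) M (xs @ [x]) = (M * burau xs) * burau_gen x"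
    using snoc by simp
  also have "\<dots> = M * (burau xs * burau_gen x)"
    using snoc.prems burau_carrier gen_carrier by (metis assoc_mult_mat)
  also have "burau xs * burau_gen x = burau (xs @ [x])"
    by (simp add: burau_def)
  finally show ?case .
qed

lemma burau_append: "burau (xs @ ys) = burau xs * burau ys"
  unfolding burau_def[of "xs @ ys"] foldl_append
  by (subst foldl_burau) (auto simp: burau_carrier burau_def[symmetric])

lemma tvar_nz: "tvar \<noteq> 0"
  by (simp add: tvar_def)




definition m4 :: "nat \<Rightarrow> nat \<Rightarrow> int poly" where "m4 a i = monom 1 (4*a+i)"

lemma coeff_m4: "i < 4 \<Longrightarrow> j < 4 \<Longrightarrow> coeff (m4 a i) (4*q+j) = (if a = q \<and> i = j then 1 else 0)"
  unfolding m4_def coeff_monom by presburger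

lemma lt4: "(0::nat) < 4" "(1::nat) < 4" "(2::nat) < 4" "(3::nat) < 4" by auto

definition J1 :: "nat \<Rightarrow> nat \<Rightarrow> nat \<Rightarrow> bool" where
  "J1 n q r \<longleftrightarrow> (r = 0 \<and> (q < n+1 \<or> 2*n+3 \<le> q)) \<or> (r = 3 \<and> ((n \<le> q \<and> q < 2*n+2) \<or> 3*n+3 \<le> q))
     \<or> (r = 2 \<and> n+1 \<le> q) \<or> (r = 1 \<and> 2*n+2 \<le> q)"

definition J2 :: "nat \<Rightarrow> nat \<Rightarrow> nat \<Rightarrow> bool" where
  "J2 n q r \<longleftrightarrow> (r = 0 \<and> (q < n+1 \<or> (n+2 \<le> q \<and> q < 2*n+2) \<or> 2*n+3 \<le> q))
     \<or> (r = 3 \<and> (q = n \<or> q = 2*n+1 \<or> 3*n+3 \<le> q))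
     \<or> (r = 2 \<and> n+1 \<le> q) \<or> (r = 1 \<and> 2*n+2 \<le> q)"

definition D1 :: "nat \<Rightarrow> int poly" where
  "D1 n = m4 0 0 + m4 n 3 - m4 (n+1) 0 + m4 (n+1) 2 + m4 (n*2+2) 1
     - m4 (n*2+2) 3 + m4 (n*2+3) 0 + m4 (n*3+3) 3"

definition D2 :: "nat \<Rightarrow> int poly" where
  "D2 n = m4 0 0 + m4 n 3 - m4 (n+1) 0 + m4 (n+1) 2 - m4 (n+1) 3
     + m4 (n+2) 0 + m4 (n*2+1) 3 - m4 (n*2+2) 0 + m4 (n*2+2) 1
     - m4 (n*2+2) 3 + m4 (n*2+3) 0 + m4 (n*3+3) 3"

lemma r4: "(r::nat) < 4 \<longleftrightarrow> r = 0 \<or> r = 1 \<or> r = 2 \<or> r = 3" by auto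

lemma fps_Q: "fps_of_poly [:1,1,1,1::int:] = 1 + fps_X + fps_X^2 + fps_X^3"
proof (rule fps_ext)
  fix s show "fps_nth (fps_of_poly [:1,1,1,1::int:]) s = fps_nth (1 + fps_X + fps_X^2 + fps_X^3) s"
    by (cases s; cases "s - 1"; cases "s - 2"; cases "s - 3") (auto simp: coeff_pCons fps_X_power_nth split: nat.splits)
qed

lemma fps_prod4: "(1 - fps_X) * (1 + fps_X + fps_X^2 + fps_X^3) = (1 - fps_X^4 :: int fps)"
  by (simp add: algebra_simps power_numeral_reduce)

lemma sg_generic:
  fixes D :: "int poly" and J :: "nat \<Rightarrow> nat \<Rightarrow> bool" and L :: nat
  assumes cD: "\<And>q r. r < 4 \<Longrightarrow> coeff D (4*q+r) = of_bool (J q r) - of_bool (0 < q \<and> J (q-1) r)"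
    and big: "\<And>q r. r < 4 \<Longrightarrow> L \<le> q \<Longrightarrow> J q r" and J0: "J 0 0"
  shows "\<exists>p. coeff p 0 = 1 \<and> p * [:1,1,1,1:] = D \<and> is_formal_semigroup p {s. J (s div 4) (s mod 4)}"
proof -
  define ind where "ind s = J (s div 4) (s mod 4)" for s
  have cDs: "coeff D s = of_bool (ind s) - of_bool (4 \<le> s \<and> ind (s-4))" for s
  proof -
    define q r where "q = s div 4" and "r = s mod 4"
    have s: "s = 4*q + r" and r: "r < 4" unfolding q_def r_def by auto
    have "0 < q \<longleftrightarrow> 4 \<le> s" using s r by auto
    moreover have "0 < q \<Longrightarrow> (s - 4) div 4 = q - 1 \<and> (s - 4) mod 4 = r"
    proof -
      assume "0 < q"
      then have "s - 4 = 4*(q-1) + r" using s by (cases q) auto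
      then show ?thesis using r by simp
    qed
    ultimately show ?thesis using cD[OF r, of q] unfolding ind_def q_def[symmetric] r_def[symmetric]
      by (cases "0 < q") (auto simp: s)
  qed
  have bigs: "4*L \<le> s \<Longrightarrow> ind s" for s
    unfolding ind_def by (rule big) auto
  define f :: "nat \<Rightarrow> int" where "f s = of_bool (ind s) - (if s = 0 then 0 else of_bool (ind (s-1)))" for s
  define p where "p = Poly (map f [0..<4*L+1])"
  have cp: "coeff p s = f s" for s
  proof (cases "s < 4*L+1")
    case True then show ?thesis by (simp add: p_def nth_default_def del: upt_Suc)
  next
    case False
    then have "f s = 0" using bigs[of s] bigs[of "s-1"] by (simp add: f_def)
    then show ?thesis using False by (simp add: p_def nth_default_def del: upt_Suc)
  qed
  define F :: "int fps" where "F = Abs_fps (\<lambda>s. if s \<in> {s. J (s div 4) (s mod 4)} then 1 else 0)"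
  have fp: "fps_of_poly p = (1 - fps_X) * F"
  proof (rule fps_ext)
    fix s
    have "fps_nth ((1 - fps_X) * F) s = fps_nth F s - fps_nth (fps_X * F) s" by (simp add: left_diff_distrib)
    then show "fps_nth (fps_of_poly p) s = fps_nth ((1 - fps_X) * F) s"
      by (simp add: cp f_def F_def ind_def)
  qed
  have "fps_of_poly (p * [:1,1,1,1:]) = (1 - fps_X^4) * F"
    unfolding fps_of_poly_mult fp fps_Q fps_prod4[symmetric] by (simp add: algebra_simps)
  also have "\<dots> = fps_of_poly D"
  proof (rule fps_ext)
    fix s
    have "fps_nth ((1 - fps_X^4) * F) s = fps_nth F s - fps_nth (fps_X^4 * F) s" by (simp add: left_diff_distrib)
    then show "fps_nth ((1 - fps_X^4) * F) s = fps_nth (fps_of_poly D) s"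
      by (simp add: fps_X_power_mult_nth cDs F_def ind_def not_less)
  qed
  finally have pD: "p * [:1,1,1,1:] = D" by (simp add: fps_of_poly_eq_iff)
  have "coeff p 0 = 1" using J0 by (simp add: cp f_def ind_def)
  moreover have "is_formal_semigroup p {s. J (s div 4) (s mod 4)}"
    unfolding is_formal_semigroup_def fp F_def ..
  ultimately show ?thesis using pD by blast
qed


lemma final_generic:
  fixes J :: "nat \<Rightarrow> nat \<Rightarrow> bool"
  assumes dt: "det (1\<^sub>m 3 - burau w) = to_fract D"
    and cD: "\<And>q r. r < 4 \<Longrightarrow> coeff D (4*q+r) = of_bool (J q r) - of_bool (0 < q \<and> J (q-1) r)"
    and big: "\<And>q r. r < 4 \<Longrightarrow> L \<le> q \<Longrightarrow> J q r" and J0: "J 0 0"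
    and a: "J 1 0" and b: "J n 0" and c: "\<not> J (n+1) 0"
  shows "\<exists>p S. alexander_poly_closure w p \<and> is_formal_semigroup p S \<and>
           4 \<in> S \<and> 4 * n + 4 \<notin> S \<and> \<not> (\<forall>a \<in> S. \<forall>b \<in> S. a + b \<in> S)"
proof -
  define S where "S = {s. J (s div 4) (s mod 4)}"
  obtain p where p: "coeff p 0 = 1" "p * [:1,1,1,1:] = D" "is_formal_semigroup p S"
    using sg_generic[OF cD big J0] unfolding S_def by blast
  have al: "alexander_poly_closure w p"
    unfolding alexander_poly_closure_def
    by (rule conjI[OF p(1)], rule exI[of _ 1], rule exI[of _ 0]) (unfold p(2), simp add: dt)
  have s4: "4 \<in> S" using a by (simp add: S_def)
  have s44: "4*n+4 \<notin> S" using c by (simp add: S_def)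
  have s4n: "4*n \<in> S" using b by (simp add: S_def)
  have nc: "\<not> (\<forall>a \<in> S. \<forall>b \<in> S. a + b \<in> S)"
  proof
    assume H: "\<forall>a \<in> S. \<forall>b \<in> S. a + b \<in> S"
    have "4*n + 4 \<in> S" using H s4 s4n by blast
    with s44 show False by contradiction
  qed
  show ?thesis using al p(3) s4 s44 nc by blast
qed

schematic_goal coeff_D1_aux: "(\<forall>q r. r < 4 \<longrightarrow> coeff (D1 n) (4*q+r) = of_bool (J1 n q r) - of_bool (0 < q \<and> J1 n (q-1) r)) \<and> (?dmy::bool) = ?dmy"
  apply (rule conjI[OF _ refl])
  apply (intro allI impI)
  apply (simp only: D1_def coeff_add coeff_diff coeff_m4 lt4)
  apply (unfold J1_def)
  apply (subst (asm) r4)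
  apply (elim disjE)
  by (auto split: if_splits)

lemma coeff_D1: "r < 4 \<Longrightarrow> coeff (D1 n) (4*q+r) = of_bool (J1 n q r) - of_bool (0 < q \<and> J1 n (q-1) r)"
  using coeff_D1_aux[THEN conjunct1] by blast

schematic_goal coeff_D2_aux: "(\<forall>q r. r < 4 \<longrightarrow> coeff (D2 n) (4*q+r) = of_bool (J2 n q r) - of_bool (0 < q \<and> J2 n (q-1) r)) \<and> (?dmy::bool) = ?dmy"
  apply (rule conjI[OF _ refl])
  apply (intro allI impI)
  apply (simp only: D2_def coeff_add coeff_diff coeff_m4 lt4)
  apply (unfold J2_def)
  apply (subst (asm) r4)
  apply (elim disjE)
  by (auto split: if_splits)

lemma coeff_D2: "r < 4 \<Longrightarrow> coeff (D2 n) (4*q+r) = of_bool (J2 n q r) - of_bool (0 < q \<and> J2 n (q-1) r)"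
  using coeff_D2_aux[THEN conjunct1] by blast

schematic_goal twist0_aux: "(burau [1,2,3,1,2,3,1,2,3,1,2,3] = m3 (tvar^4) 0 0 0 (tvar^4) 0 0 0 (tvar^4)) \<and> (?dmy::bool) = ?dmy"
  apply (rule conjI[OF _ refl])
  apply (unfold burau_def m3_one)
  by (simp add: gen1 gen2 gen3 m3_mult m3_eq_iff) (simp add: algebra_simps power_numeral_reduce)

lemmas twist0 = twist0_aux[THEN conjunct1]

lemma to_fract_pow: "to_fract (x ^ k) = to_fract x ^ k"
  by (induction k) auto

lemma to_fract_m4: "to_fract (m4 a i) = (tvar^4)^a * tvar^i"
  unfolding m4_def monom_altdef by (simp add: to_fract_pow tvar_def power_add power_mult)

lemma burau_conc: "burau (concat (replicate (4*n) [1,2,3])) = m3 ((tvar^4)^n) 0 0 0 ((tvar^4)^n) 0 0 0 ((tvar^4)^n)"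
proof (induction n)
  case 0 then show ?case by (simp add: burau_def m3_one)
next
  case (Suc n)
  have "concat (replicate (4 * Suc n) [1,2,3::int]) = [1,2,3,1,2,3,1,2,3,1,2,3] @ concat (replicate (4 * n) [1,2,3])"
    by (simp add: numeral_eq_Suc)
  then have "burau (concat (replicate (4 * Suc n) [1,2,3::int])) = burau [1,2,3,1,2,3,1,2,3,1,2,3] * burau (concat (replicate (4 * n) [1,2,3]))"
    by (simp only: burau_append)
  then show ?case using Suc by (simp add: twist0 m3_mult)
qed

lemma burau_K: "burau (P @ concat (replicate (4*n) [1,2,3]) @ Q) = (tvar^4)^n \<cdot>\<^sub>m burau (P @ Q)"
proof -
  have C: "burau (concat (replicate (4*n) [1,2,3])) = (tvar^4)^n \<cdot>\<^sub>m 1\<^sub>m 3"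
    unfolding burau_conc m3_one m3_smult by simp
  show ?thesis unfolding burau_append C
    using burau_carrier[of P] burau_carrier[of Q]
    by (simp add: mult_smult_distrib[of _ 3 3 _ 3] mult_smult_assoc_mat[of _ 3 3 _ 3])
qed


schematic_goal M2_aux: "(burau [2,1,3,2,-2,2,3,2,3,2,3,2,3,2,3,2,3] = m3 (- (tvar^3) + tvar^4 - tvar^6) (tvar^6) 0 (- (tvar^3) + tvar^5 - tvar^6) (tvar^7) (- (tvar^7)) (tvar^2 - tvar^3 + tvar^5 - tvar^6) (tvar^7) (- (tvar^7))) \<and> (?dmy::bool) = ?dmy"
  apply (rule conjI[OF _ refl])
  apply (insert tvar_nz)
  apply (unfold burau_def m3_one)
  by (simp add: gen1 gen2 gen3 genm2 m3_mult m3_eq_iff) (simp add: field_simps power_numeral_reduce)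

lemmas M2 = M2_aux[THEN conjunct1]

schematic_goal M3_aux: "(burau [2,1,3,2,-3,2,3,2,3,2,3,2,3,2,3,2,3] = m3 (- (tvar^3) + tvar^4 - tvar^6 + tvar^7) (tvar^6 - tvar^7) (- (tvar^5)) (- (tvar^3) + tvar^5 - tvar^6 + tvar^8) (- (tvar^8)) 0 (tvar^2 - tvar^3 + tvar^5 - tvar^6 + tvar^8) (- (tvar^8)) 0) \<and> (?dmy::bool) = ?dmy"
  apply (rule conjI[OF _ refl])
  apply (insert tvar_nz)
  apply (unfold burau_def m3_one)
  by (simp add: gen1 gen2 gen3 genm3 m3_mult m3_eq_iff) (simp add: field_simps power_numeral_reduce)

lemmas M3 = M3_aux[THEN conjunct1]

schematic_goal detpoly1_aux: "(det (1\<^sub>m 3 - y \<cdot>\<^sub>m m3 (- (tvar^3) + tvar^4 - tvar^6) (tvar^6) 0 (- (tvar^3) + tvar^5 - tvar^6) (tvar^7) (- (tvar^7)) (tvar^2 - tvar^3 + tvar^5 - tvar^6) (tvar^7) (- (tvar^7))) = (tvar^4)^0 * tvar^0 + y * tvar^3 - y * (tvar^4)^1 * tvar^0 + y * (tvar^4)^1 * tvar^2 + y^2 * (tvar^4)^2 * tvar^1 - y^2 * (tvar^4)^2 * tvar^3 + y^2 * (tvar^4)^3 * tvar^0 + y^3 * (tvar^4)^3 * tvar^3) \<and> (?dmy::bool) = ?dmy"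
  apply (rule conjI[OF _ refl])
  apply (unfold m3_one m3_smult m3_minus det_m3)
  by (simp add: algebra_simps power_numeral_reduce)

lemmas detpoly1 = detpoly1_aux[THEN conjunct1]

lemma burau_K1: "burau (K1_word n) = (tvar^4)^n \<cdot>\<^sub>m burau [2,1,3,2,-2,2,3,2,3,2,3,2,3,2,3,2,3]"
proof -
  have w: "[2,1,3,2] @ [-2] @ concat (replicate 6 [2,3]) = [2,1,3,2,-2,2,3,2,3,2,3,2,3,2,3,2,3::int]"
    by (simp add: numeral_eq_Suc)
  show ?thesis unfolding K1_word_def burau_K w ..
qed

schematic_goal det_K1_aux: "(det (1\<^sub>m 3 - burau (K1_word n)) = to_fract (D1 n)) \<and> (?dmy::bool) = ?dmy"
  apply (rule conjI[OF _ refl])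
  apply (unfold burau_K1 M2 detpoly1 D1_def to_fract_add to_fract_diff to_fract_m4 power_add power_mult)
  by simp

lemmas det_K1 = det_K1_aux[THEN conjunct1]

schematic_goal detpoly2_aux: "(det (1\<^sub>m 3 - y \<cdot>\<^sub>m m3 (- (tvar^3) + tvar^4 - tvar^6 + tvar^7) (tvar^6 - tvar^7) (- (tvar^5)) (- (tvar^3) + tvar^5 - tvar^6 + tvar^8) (- (tvar^8)) 0 (tvar^2 - tvar^3 + tvar^5 - tvar^6 + tvar^8) (- (tvar^8)) 0) = (tvar^4)^0 * tvar^0 + y * tvar^3 - y * (tvar^4)^1 * tvar^0 + y * (tvar^4)^1 * tvar^2 - y * (tvar^4)^1 * tvar^3 + y * (tvar^4)^2 * tvar^0 + y^2 * (tvar^4)^1 * tvar^3 - y^2 * (tvar^4)^2 * tvar^0 + y^2 * (tvar^4)^2 * tvar^1 - y^2 * (tvar^4)^2 * tvar^3 + y^2 * (tvar^4)^3 * tvar^0 + y^3 * (tvar^4)^3 * tvar^3) \<and> (?dmy::bool) = ?dmy"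
  apply (rule conjI[OF _ refl])
  apply (unfold m3_one m3_smult m3_minus det_m3)
  by (simp add: algebra_simps power_numeral_reduce)

lemmas detpoly2 = detpoly2_aux[THEN conjunct1]

lemma burau_K2: "burau (K2_word n) = (tvar^4)^n \<cdot>\<^sub>m burau [2,1,3,2,-3,2,3,2,3,2,3,2,3,2,3,2,3]"
proof -
  have w: "[2,1,3,2] @ [-3] @ concat (replicate 6 [2,3]) = [2,1,3,2,-3,2,3,2,3,2,3,2,3,2,3,2,3::int]"
    by (simp add: numeral_eq_Suc)
  show ?thesis unfolding K2_word_def burau_K w ..
qed

schematic_goal det_K2_aux: "(det (1\<^sub>m 3 - burau (K2_word n)) = to_fract (D2 n)) \<and> (?dmy::bool) = ?dmy"
  apply (rule conjI[OF _ refl])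
  apply (unfold burau_K2 M3 detpoly2 D2_def to_fract_add to_fract_diff to_fract_m4 power_add power_mult)
  by simp

lemmas det_K2 = det_K2_aux[THEN conjunct1]

schematic_goal K1_part_aux: "(n \<ge> 1 \<longrightarrow> (\<exists>p S. alexander_poly_closure (K1_word n) p \<and> is_formal_semigroup p S \<and>
           4 \<in> S \<and> 4 * n + 4 \<notin> S \<and> \<not> (\<forall>a \<in> S. \<forall>b \<in> S. a + b \<in> S))) \<and> (?dmy::bool) = ?dmy"
  apply (rule conjI[OF _ refl], rule impI)
  apply (rule final_generic[where J="J1 n" and L="3*n+3", OF det_K1 coeff_D1])
  by (auto simp: J1_def r4)

schematic_goal K2_part_aux: "(n \<ge> 1 \<longrightarrow> (\<exists>p S. alexander_poly_closure (K2_word n) p \<and> is_formal_semigroup p S \<and>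
           4 \<in> S \<and> 4 * n + 4 \<notin> S \<and> \<not> (\<forall>a \<in> S. \<forall>b \<in> S. a + b \<in> S))) \<and> (?dmy::bool) = ?dmy"
  apply (rule conjI[OF _ refl], rule impI)
  apply (rule final_generic[where J="J2 n" and L="3*n+3", OF det_K2 coeff_D2])
  by (auto simp: J2_def r4)

theorem corollary3p5:
  fixes n :: nat
  assumes "n \<ge> 1"
  shows "\<forall>w \<in> {K1_word n, K2_word n}. \<exists>p S.
           alexander_poly_closure w p \<and> is_formal_semigroup p S \<and>
           4 \<in> S \<and> 4 * n + 4 \<notin> S \<and>
           \<not> (\<forall>a \<in> S. \<forall>b \<in> S. a + b \<in> S)"
  using K1_part_aux[THEN conjunct1] K2_part_aux[THEN conjunct1] assms by simp

end
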